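(* Let $k\ge 2$ be an integer, and let $G$ be the graph obtained from two disjoint copies of the helm $H_4$ and a path $u_1u_2\cdots u_k$ (of length $k-1$) by identifying $u_1$ with the apex vertex of the first copy of $H_4$ and $u_k$ with the apex vertex of the second copy of $H_4$. Then $G$ admits a signed product cordial labeling.
   Context: A graph $G$ is signed product cordial if there is a vertex labeling $\alpha: V(G)\to\{1,-1\}$ such that, with the induced edge labeling $\alpha^*(uv)=\alpha(u)\alpha(v)$, we have $|v_\alpha(-1)-v_\alpha(1)|\le 1$ and $|e_{\alpha^*}(-1)-e_{\alpha^*}(1)|\le 1$. Here $v_\alpha(x)$ is the number of vertices labeled $x$ and $e_{\alpha^*}(x)$ is the number of edges labeled $x$; such an $\alpha$ is called a signed product cordial labeling. The wheel $W_n$ consists of a cycle $C_n$ (the rim) together with an apex vertex adjacent to every rim vertex. The helm $H_n$ ($n\ge 3$) is obtained from $W_n$ by attaching a pendant edge at each rim vertex. Thus $H_4$ has an apex $v_0$, rim vertices $v_1,\dots,v_4$ forming a $4$-cycle, each adjacent to $v_0$, and pendant vertices $v_1',\dots,v_4'$ with $v_i'$ adjacent only to $v_i$. *)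

theory Defs
  imports Main
begin

text \<open>A simple graph is given by a vertex set V and an edge set E of 2-element vertex sets.
  The induced edge label of e = {u,v} is the product of the labels of u and v.\<close>

definition signed_product_cordial_labeling :: "'a set \<Rightarrow> 'a set set \<Rightarrow> ('a \<Rightarrow> int) \<Rightarrow> bool" where
  "signed_product_cordial_labeling V E \<alpha> \<longleftrightarrow>
     (\<forall>v\<in>V. \<alpha> v \<in> {1, -1}) \<and>
     \<bar>int (card {v\<in>V. \<alpha> v = -1}) - int (card {v\<in>V. \<alpha> v = 1})\<bar> \<le> 1 \<and>
     \<bar>int (card {e\<in>E. (\<Prod>v\<in>e. \<alpha> v) = -1}) - int (card {e\<in>E. (\<Prod>v\<in>e. \<alpha> v) = 1})\<bar> \<le> 1"

definition signed_product_cordial :: "'a set \<Rightarrow> 'a set set \<Rightarrow> bool" where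
  "signed_product_cordial V E \<longleftrightarrow> (\<exists>\<alpha>. signed_product_cordial_labeling V E \<alpha>)"

text \<open>Vertices of the graph: Path j (j = 1..k) is the path vertex u_j; u_1 is the apex of
  copy 1 of H_4 and u_k the apex of copy 2. Rim c i and Pend c i (c = 1,2; i = 1..4) are
  the rim and pendant vertices of copy c.\<close>

datatype gv = Path nat | Rim nat nat | Pend nat nat

definition apex :: "nat \<Rightarrow> nat \<Rightarrow> gv" where
  "apex k c = (if c = 1 then Path 1 else Path k)"

definition two_helms_path_V :: "nat \<Rightarrow> gv set" where
  "two_helms_path_V k = Path ` {1..k} \<union> {Rim c i | c i. c \<in> {1,2} \<and> i \<in> {1..4}}
      \<union> {Pend c i | c i. c \<in> {1,2} \<and> i \<in> {1..4}}"

definition two_helms_path_E :: "nat \<Rightarrow> gv set set" where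
  "two_helms_path_E k =
      {{Rim c i, Rim c (i mod 4 + 1)} | c i. c \<in> {1,2} \<and> i \<in> {1..4}}
    \<union> {{apex k c, Rim c i} | c i. c \<in> {1,2} \<and> i \<in> {1..4}}
    \<union> {{Rim c i, Pend c i} | c i. c \<in> {1,2} \<and> i \<in> {1..4}}
    \<union> {{Path j, Path (j + 1)} | j. j \<in> {1..<k}}"

end

theory Submission
  imports Defs
begin

fun lab :: "gv \<Rightarrow> int" where
  "lab (Path j) = (if j mod 4 = 0 \<or> j mod 4 = 1 then 1 else -1)"
| "lab (Rim c i) = (if i \<le> 2 then 1 else -1)"
| "lab (Pend c i) = (if odd i then 1 else -1)"

lemma filter_insert_Collect:
  "{x \<in> insert a A. P x} = (if P a then insert a {x\<in>A. P x} else {x\<in>A. P x})"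
  by auto

lemma filter_empty_Collect: "{x \<in> {}. P x} = {}" by auto

lemma fin4: "(i::nat) \<in> {1..4} \<longleftrightarrow> i = 1 \<or> i = 2 \<or> i = 3 \<or> i = 4" by auto
lemma fin2: "(c::nat) \<in> {1,2} \<longleftrightarrow> c = 1 \<or> c = 2" by auto

definition HV :: "gv set" where
  "HV = {Rim 1 1, Rim 1 2, Rim 1 3, Rim 1 4, Rim 2 1, Rim 2 2, Rim 2 3, Rim 2 4,
         Pend 1 1, Pend 1 2, Pend 1 3, Pend 1 4, Pend 2 1, Pend 2 2, Pend 2 3, Pend 2 4}"

definition HR :: "gv set list" where
  "HR = [{Rim 1 1, Rim 1 2}, {Rim 1 2, Rim 1 3}, {Rim 1 3, Rim 1 4}, {Rim 1 4, Rim 1 1},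
           {Rim 2 1, Rim 2 2}, {Rim 2 2, Rim 2 3}, {Rim 2 3, Rim 2 4}, {Rim 2 4, Rim 2 1}]"
definition HA :: "nat \<Rightarrow> gv set list" where
  "HA k = [{Path 1, Rim 1 1}, {Path 1, Rim 1 2}, {Path 1, Rim 1 3}, {Path 1, Rim 1 4},
           {Path k, Rim 2 1}, {Path k, Rim 2 2}, {Path k, Rim 2 3}, {Path k, Rim 2 4}]"
definition HP :: "gv set list" where
  "HP = [{Rim 1 1, Pend 1 1}, {Rim 1 2, Pend 1 2}, {Rim 1 3, Pend 1 3}, {Rim 1 4, Pend 1 4},
           {Rim 2 1, Pend 2 1}, {Rim 2 2, Pend 2 2}, {Rim 2 3, Pend 2 3}, {Rim 2 4, Pend 2 4}]"

definition HEl :: "nat \<Rightarrow> gv set list" where "HEl k = HR @ HA k @ HP"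

definition HE :: "nat \<Rightarrow> gv set set" where "HE k = set (HEl k)"

definition PE :: "nat \<Rightarrow> gv set set" where
  "PE k = (\<lambda>j. {Path j, Path (Suc j)}) ` {1..<k}"

lemma V_eq: "two_helms_path_V k = Path ` {1..k} \<union> HV"
  unfolding two_helms_path_V_def HV_def by (auto simp: fin4 fin2)

lemma gen8: "{f c i | c i. c \<in> {1,2::nat} \<and> i \<in> {1..4::nat}} =
   {f 1 1, f 1 2, f 1 3, f 1 4, f 2 1, f 2 2, f 2 3, f 2 4}"
proof -
  have a: "{1..4::nat} = {1,2,3,4}" by auto
  have "{f c i | c i. c \<in> {1,2::nat} \<and> i \<in> {1..4::nat}} = (\<Union>c\<in>{1,2}. f c ` {1..4})" by blast
  then show ?thesis unfolding a by auto
qed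

lemma gen_path: "{{Path j, Path (j + 1)} | j. j \<in> {1..<k}} = PE k"
  unfolding PE_def by auto

lemma compR: "{{Rim c i, Rim c (i mod 4 + 1)} | c i. c \<in> {1,2} \<and> i \<in> {1..4}} = set HR"
proof -
  have m: "(1::nat) mod 4 + 1 = 2" "(2::nat) mod 4 + 1 = 3" "(3::nat) mod 4 + 1 = 4" "(4::nat) mod 4 + 1 = 1"
    by simp_all
  show ?thesis unfolding gen8 HR_def list.set m ..
qed
lemma compA: "{{apex k c, Rim c i} | c i. c \<in> {1,2} \<and> i \<in> {1..4}} = set (HA k)"
proof -
  have m: "apex k 1 = Path 1" "apex k 2 = Path k" by (simp_all add: apex_def)
  show ?thesis unfolding gen8 HA_def list.set m ..
qed
lemma compP: "{{Rim c i, Pend c i} | c i. c \<in> {1,2} \<and> i \<in> {1..4}} = set HP"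
  unfolding gen8 HP_def list.set ..

lemma E_eq: "two_helms_path_E k = HE k \<union> PE k"
  unfolding two_helms_path_E_def gen_path compR compA compP HE_def HEl_def set_append Un_assoc ..

lemma l1: "(k + 3) div 4 + k div 4 + (if Suc k mod 4 = 0 \<or> Suc k mod 4 = 1 then 1 else 0) = (Suc k + 3) div 4 + Suc k div (4::nat)"
proof -
  obtain q r where k: "k = 4*q + r" and r: "r < 4" by (metis div_mod_decomp mod_less_divisor zero_less_numeral mult.commute)
  have "r = 0 \<or> r = 1 \<or> r = 2 \<or> r = 3" using r by auto
  then show ?thesis unfolding k by (elim disjE; simp add: mod_Suc; presburger)
qed

lemma l2: "(k + 2) div 4 + (k + 1) div 4 + (if \<not> (Suc k mod 4 = 0 \<or> Suc k mod 4 = 1) then 1 else 0) = (Suc k + 2) div 4 + (Suc k + 1) div (4::nat)"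
proof -
  obtain q r where k: "k = 4*q + r" and r: "r < 4" by (metis div_mod_decomp mod_less_divisor zero_less_numeral mult.commute)
  have "r = 0 \<or> r = 1 \<or> r = 2 \<or> r = 3" using r by auto
  then show ?thesis unfolding k by (elim disjE; simp add: mod_Suc; presburger)
qed

lemma l3: "\<bar>int ((k + 2) div 4 + (k + 1) div 4 + 8) - int ((k + 3) div 4 + k div 4 + 8)\<bar> \<le> 1"
proof -
  obtain q r where k: "k = 4*q + r" and r: "r < 4" by (metis div_mod_decomp mod_less_divisor zero_less_numeral mult.commute)
  have "r = 0 \<or> r = 1 \<or> r = 2 \<or> r = 3" using r by auto
  then show ?thesis unfolding k by (elim disjE; simp; presburger)
qed

lemma l4: "\<bar>int (12 + k div 2) - int (12 + (k - 1) div 2)\<bar> \<le> 1"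
proof -
  obtain q r where k: "k = 2*q + r" and r: "r < 2" by (metis div_mod_decomp mod_less_divisor zero_less_numeral mult.commute)
  have "r = 0 \<or> r = 1" using r by auto
  then show ?thesis unfolding k by (elim disjE; simp; presburger)
qed

lemma cnt_v1: "card {j\<in>{1..k::nat}. j mod 4 = 0 \<or> j mod 4 = 1} = (k+3) div 4 + k div 4"
proof (induction k)
  case 0 then show ?case by simp
next
  case (Suc k)
  have e: "{1..Suc k} = insert (Suc k) {1..k}" by auto
  have c: "card {j\<in>{1..Suc k}. P j} = card {j\<in>{1..k}. P j} + (if P (Suc k) then 1 else 0)" for P
    unfolding e filter_insert_Collect by simp
  show ?case unfolding c Suc by (rule l1)
qed

lemma cnt_v2: "card {j\<in>{1..k::nat}. \<not>(j mod 4 = 0 \<or> j mod 4 = 1)} = (k+2) div 4 + (k+1) div 4"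
proof (induction k)
  case 0 then show ?case by simp
next
  case (Suc k)
  have e: "{1..Suc k} = insert (Suc k) {1..k}" by auto
  have c: "card {j\<in>{1..Suc k}. P j} = card {j\<in>{1..k}. P j} + (if P (Suc k) then 1 else 0)" for P
    unfolding e filter_insert_Collect by simp
  show ?case unfolding c Suc by (rule l2)
qed

lemma cnt_e1: "card {j\<in>{1..<k::nat}. odd j} = k div 2"
proof (induction k)
  case 0 then show ?case by simp
next
  case (Suc k)
  show ?case
  proof (cases "k = 0")
    case True then show ?thesis by simp
  next
    case False
    then have e: "{1..<Suc k} = insert k {1..<k}" by auto
    show ?thesis unfolding e filter_insert_Collect using Suc False by (auto; presburger)
  qed
qed

lemma cnt_e2: "card {j\<in>{1..<k::nat}. \<not> odd j} = (k - 1) div 2"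
proof (induction k)
  case 0 then show ?case by simp
next
  case (Suc k)
  show ?case
  proof (cases "k = 0")
    case True then show ?thesis by simp
  next
    case False
    then have e: "{1..<Suc k} = insert k {1..<k}" by auto
    show ?thesis unfolding e filter_insert_Collect using Suc False by (auto; presburger)
  qed
qed

lemma pe_prod: "(\<Prod>v\<in>{Path j, Path (Suc j)}. lab v) = (if odd j then -1 else 1)"
  by simp presburger

lemma filter_image: "{e \<in> f ` A. P e} = f ` {j \<in> A. P (f j)}" by blast

lemma inj_pe: "inj_on (\<lambda>j. {Path j, Path (Suc j)}) A"
  by (auto simp: inj_on_def doubleton_eq_iff)

lemma pe_m1: "card {e \<in> PE k. (\<Prod>v\<in>e. lab v) = -1} = k div 2"
proof -
  have "{e \<in> PE k. (\<Prod>v\<in>e. lab v) = -1} = (\<lambda>j. {Path j, Path (Suc j)}) ` {j\<in>{1..<k}. odd j}"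
    unfolding PE_def filter_image pe_prod by (rule arg_cong[where f="image _"]) auto
  then show ?thesis using card_image[OF inj_pe] cnt_e1 by simp
qed

lemma pe_p1: "card {e \<in> PE k. (\<Prod>v\<in>e. lab v) = 1} = (k - 1) div 2"
proof -
  have "{e \<in> PE k. (\<Prod>v\<in>e. lab v) = 1} = (\<lambda>j. {Path j, Path (Suc j)}) ` {j\<in>{1..<k}. \<not> odd j}"
    unfolding PE_def filter_image pe_prod by (rule arg_cong[where f="image _"]) auto
  then show ?thesis using card_image[OF inj_pe] cnt_e2 by simp
qed

lemma dist_HEl: "k \<noteq> 1 \<Longrightarrow> distinct (HEl k)"
  unfolding HEl_def HR_def HA_def HP_def by (simp add: doubleton_eq_iff)

lemma card_filter_list: "distinct xs \<Longrightarrow> card {e \<in> set xs. P e} = length (filter P xs)"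
proof -
  assume d: "distinct xs"
  have "{e \<in> set xs. P e} = set (filter P xs)" by auto
  then show ?thesis using distinct_card[OF distinct_filter[OF d]] by simp
qed

lemma he_cnt:
  assumes "k \<noteq> 1"
  shows "card {e \<in> HE k. (\<Prod>v\<in>e. lab v) = -1} = 12 \<and> card {e \<in> HE k. (\<Prod>v\<in>e. lab v) = 1} = 12"
proof -
  have p1: "lab (Path (Suc 0)) = 1" by simp
  have "lab (Path k) = 1 \<or> lab (Path k) = -1" by simp
  then show ?thesis
  proof
    assume h: "lab (Path k) = 1"
    show ?thesis using assms h p1 unfolding HE_def card_filter_list[OF dist_HEl[OF assms]] unfolding HEl_def HR_def HA_def HP_def
      by (simp del: lab.simps(1))
  next
    assume h: "lab (Path k) = -1"
    show ?thesis using assms h p1 unfolding HE_def card_filter_list[OF dist_HEl[OF assms]] unfolding HEl_def HR_def HA_def HP_def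
      by (simp del: lab.simps(1))
  qed
qed

lemma hv_m1: "card {v\<in>HV. lab v = -1} = 8"
  unfolding HV_def filter_insert_Collect filter_empty_Collect by simp
lemma hv_p1: "card {v\<in>HV. lab v = 1} = 8"
  unfolding HV_def filter_insert_Collect filter_empty_Collect by simp

lemma filter_Un: "{x \<in> A \<union> B. P x} = {x\<in>A. P x} \<union> {x\<in>B. P x}" by blast

lemma fin_HV: "finite HV" by (simp add: HV_def)
lemma fin_HE: "finite (HE k)" by (simp add: HE_def)
lemma fin_PE: "finite (PE k)" by (simp add: PE_def)

theorem theorem2p4:
  fixes k :: nat
  assumes "k \<ge> 2"
  shows "signed_product_cordial (two_helms_path_V k) (two_helms_path_E k)"
proof -
  have dV: "Path ` {1..k} \<inter> HV = {}" by (auto simp: HV_def)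
  have h1: "\<forall>e\<in>HE k. \<exists>c i. Rim c i \<in> e" by (simp add: HE_def HEl_def HR_def HA_def HP_def) blast
  have h2: "\<forall>e\<in>PE k. \<forall>v\<in>e. \<exists>j. v = Path j" by (auto simp: PE_def)
  have dE: "HE k \<inter> PE k = {}"
  proof (rule ccontr)
    assume "HE k \<inter> PE k \<noteq> {}"
    then obtain e where "e \<in> HE k" "e \<in> PE k" by blast
    then obtain c i where "Rim c i \<in> e" "\<forall>v\<in>e. \<exists>j. v = Path j" using h1 h2 by blast
    then show False by blast
  qed
  have vm: "card {v\<in>two_helms_path_V k. lab v = -1} = (k+2) div 4 + (k+1) div 4 + 8"
  proof -
    have "{v\<in>Path ` {1..k}. lab v = -1} = Path ` {j\<in>{1..k}. \<not>(j mod 4 = 0 \<or> j mod 4 = 1)}"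
      unfolding filter_image by (rule arg_cong[where f="image _"]) auto
    then have "card {v\<in>Path ` {1..k}. lab v = -1} = (k+2) div 4 + (k+1) div 4"
      using cnt_v2 card_image[of Path] by (simp add: inj_on_def)
    moreover have "card ({v\<in>Path ` {1..k}. lab v = -1} \<union> {v\<in>HV. lab v = -1}) =
        card {v\<in>Path ` {1..k}. lab v = -1} + card {v\<in>HV. lab v = -1}"
      by (rule card_Un_disjoint) (use dV fin_HV in auto)
    ultimately show ?thesis unfolding V_eq filter_Un hv_m1 by simp
  qed
  have vp: "card {v\<in>two_helms_path_V k. lab v = 1} = (k+3) div 4 + k div 4 + 8"
  proof -
    have "{v\<in>Path ` {1..k}. lab v = 1} = Path ` {j\<in>{1..k}. j mod 4 = 0 \<or> j mod 4 = 1}"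
      unfolding filter_image by (rule arg_cong[where f="image _"]) auto
    then have "card {v\<in>Path ` {1..k}. lab v = 1} = (k+3) div 4 + k div 4"
      using cnt_v1 card_image[of Path] by (simp add: inj_on_def)
    moreover have "card ({v\<in>Path ` {1..k}. lab v = 1} \<union> {v\<in>HV. lab v = 1}) =
        card {v\<in>Path ` {1..k}. lab v = 1} + card {v\<in>HV. lab v = 1}"
      by (rule card_Un_disjoint) (use dV fin_HV in auto)
    ultimately show ?thesis unfolding V_eq filter_Un hv_p1 by simp
  qed
  have k1: "k \<noteq> 1" using assms by simp
  have em: "card {e\<in>two_helms_path_E k. (\<Prod>v\<in>e. lab v) = -1} = 12 + k div 2"
  proof -
    have "card ({e\<in>HE k. (\<Prod>v\<in>e. lab v) = -1} \<union> {e\<in>PE k. (\<Prod>v\<in>e. lab v) = -1}) =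
        card {e\<in>HE k. (\<Prod>v\<in>e. lab v) = -1} + card {e\<in>PE k. (\<Prod>v\<in>e. lab v) = -1}"
      by (rule card_Un_disjoint) (use dE fin_HE fin_PE in auto)
    then show ?thesis unfolding E_eq filter_Un using he_cnt[OF k1] pe_m1 by simp
  qed
  have ep: "card {e\<in>two_helms_path_E k. (\<Prod>v\<in>e. lab v) = 1} = 12 + (k - 1) div 2"
  proof -
    have "card ({e\<in>HE k. (\<Prod>v\<in>e. lab v) = 1} \<union> {e\<in>PE k. (\<Prod>v\<in>e. lab v) = 1}) =
        card {e\<in>HE k. (\<Prod>v\<in>e. lab v) = 1} + card {e\<in>PE k. (\<Prod>v\<in>e. lab v) = 1}"
      by (rule card_Un_disjoint) (use dE fin_HE fin_PE in auto)
    then show ?thesis unfolding E_eq filter_Un using he_cnt[OF k1] pe_p1 by simp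
  qed
  have "signed_product_cordial_labeling (two_helms_path_V k) (two_helms_path_E k) lab"
    unfolding signed_product_cordial_labeling_def vm vp em ep
  proof (intro conjI)
    show "\<forall>v\<in>two_helms_path_V k. lab v \<in> {1, -1}"
    proof
      fix v show "lab v \<in> {1, -1}" by (cases v) auto
    qed
    show "\<bar>int ((k + 2) div 4 + (k + 1) div 4 + 8) - int ((k + 3) div 4 + k div 4 + 8)\<bar> \<le> 1"
      by (rule l3)
    show "\<bar>int (12 + k div 2) - int (12 + (k - 1) div 2)\<bar> \<le> 1" by (rule l4)
  qed
  then show ?thesis unfolding signed_product_cordial_def by blast
qed

end
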